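(* Let $a>0$, $T>0$, $\alpha\in(0,1)$, let $n>1$ be an integer, and let $s_1,\dots,s_n$ and $w_1,\dots,w_n$ be the nodes and weights of the $n$-point Gauss–Jacobi quadrature with weight function $s^{\alpha-1}$ on $[0,a]$. Then for every $t$ with $0<t<T$, $$\left|\int_0^a e^{-ts}s^{\alpha-1}\,ds-\sum_{k=1}^n w_k e^{-s_k t}\right|<\frac{4\sqrt{\pi}\,a^{\alpha}}{e^2}\,\frac{(2n-1)n^{3/2}}{2n+\alpha}\left[\frac{a e n T}{2(2n-1)^2}\right]^{2n}.$$
   Context: The $n$-point Gauss–Jacobi quadrature with weight $s^{\alpha-1}$ on $[0,a]$ is the rule $\int_0^a \varphi(s)s^{\alpha-1}\,ds\approx \sum_{k=1}^n w_k\varphi(s_k)$ which is exact for all polynomials $\varphi$ of degree at most $2n-1$. *)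

theory Defs
  imports "HOL-Analysis.Analysis" "HOL-Computational_Algebra.Polynomial"
begin

definition gauss_jacobi_rule ::
  "real \<Rightarrow> real \<Rightarrow> nat \<Rightarrow> (nat \<Rightarrow> real) \<Rightarrow> (nat \<Rightarrow> real) \<Rightarrow> bool" where
  "gauss_jacobi_rule a \<alpha> n s w \<longleftrightarrow>
     (\<forall>p :: real poly. degree p \<le> 2 * n - 1 \<longrightarrow>
        ((\<lambda>x. poly p x * x powr (\<alpha> - 1)) has_integral
           (\<Sum>k = 1..n. w k * poly p (s k))) {0..a})"

end

theory Submission
  imports Defs
begin

definition zc :: "real \<Rightarrow> real \<Rightarrow> real poly \<Rightarrow> nat" where
  "zc c d p = (\<Sum>z\<in>{z. c \<le> z \<and> z \<le> d \<and> poly p z = 0}. order z p)"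

lemma zc_ge_subset:
  assumes "p \<noteq> 0" "finite A" "A \<subseteq> {c..d}"
  shows "(\<Sum>z\<in>A. order z p) \<le> zc c d p"
proof -
  let ?R = "{z. c \<le> z \<and> z \<le> d \<and> poly p z = 0}"
  have fin: "finite ?R" using poly_roots_finite[OF assms(1)] by (rule rev_finite_subset) auto
  have "(\<Sum>z\<in>A. order z p) = (\<Sum>z\<in>A \<inter> ?R. order z p)"
    using assms by (intro sum.mono_neutral_right) (auto simp: order_root)
  also have "\<dots> \<le> (\<Sum>z\<in>?R. order z p)"
    using fin by (intro sum_mono2) auto
  finally show ?thesis unfolding zc_def .
qed

lemma rolle_step:
  assumes p0: "p \<noteq> 0" and p1: "pderiv p \<noteq> 0"
  shows "zc c d p \<le> zc c d (pderiv p) + 1"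
proof -
  define S where "S = {z. c \<le> z \<and> z \<le> d \<and> poly p z = 0}"
  have finS: "finite S" unfolding S_def using poly_roots_finite[OF p0] by (rule rev_finite_subset) auto
  define k where "k = card S"
  define L where "L = sorted_list_of_set S"
  have setL: "set L = S" using finS L_def by simp
  have lenL: "length L = k" unfolding L_def k_def by simp
  have sw: "sorted_wrt (<) L" unfolding L_def by (rule strict_sorted_list_of_set)
  have Lmono: "L ! i < L ! j" if "i < j" "j < k" for i j
    using sw that lenL by (simp add: sorted_wrt_nth_less)
  have LS: "L ! i \<in> S" if "i < k" for i using that setL lenL nth_mem by blast
  have "\<forall>i. \<exists>xi. i < k - 1 \<longrightarrow> L ! i < xi \<and> xi < L ! Suc i \<and> poly (pderiv p) xi = 0"
  proof
    fix i show "\<exists>xi. i < k - 1 \<longrightarrow> L ! i < xi \<and> xi < L ! Suc i \<and> poly (pderiv p) xi = 0"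
    proof (cases "i < k - 1")
      case True
      have lt: "L ! i < L ! Suc i" using True by (intro Lmono) auto
      have e: "poly p (L ! i) = poly p (L ! Suc i)" using LS[of i] LS[of "Suc i"] True by (auto simp: S_def)
      obtain z where z: "L ! i < z" "z < L ! Suc i" "(poly p has_real_derivative 0) (at z)"
      proof -
        have c: "continuous_on {L ! i..L ! Suc i} (poly p)"
          by (intro continuous_intros)
        have dd: "poly p differentiable at x" for x
          using poly_DERIV[of p x] real_differentiable_def by blast
        show ?thesis using Rolle[OF lt e c dd] that by blast
      qed
      have "poly (pderiv p) z = 0" using z(3) poly_DERIV[of p z] DERIV_unique by blast
      then show ?thesis using z by blast
    qed auto
  qed
  then obtain xi where xi: "\<And>i. i < k - 1 \<Longrightarrow> L ! i < xi i \<and> xi i < L ! Suc i \<and> poly (pderiv p) (xi i) = 0"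
    by metis
  define X where "X = xi ` {..<k-1}"
  have injx: "inj_on xi {..<k-1}"
  proof (rule inj_onI)
    fix i j assume ij: "i \<in> {..<k-1}" "j \<in> {..<k-1}" "xi i = xi j"
    show "i = j"
    proof (rule ccontr)
      assume "i \<noteq> j"
      then consider "i < j" | "j < i" by linarith
      then show False
      proof cases
        case 1
        have "xi i < L ! Suc i" using xi[of i] ij(1) by auto
        also have "L ! Suc i \<le> L ! j" using 1 ij by (cases "Suc i = j") (auto intro!: less_imp_le Lmono)
        also have "L ! j < xi j" using xi[of j] ij(2) by auto
        finally show False using ij by simp
      next
        case 2
        have "xi j < L ! Suc j" using xi[of j] ij(2) by auto
        also have "L ! Suc j \<le> L ! i" using 2 ij by (cases "Suc j = i") (auto intro!: less_imp_le Lmono)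
        also have "L ! i < xi i" using xi[of i] ij(1) by auto
        finally show False using ij by simp
      qed
    qed
  qed
  have cardX: "card X = k - 1" unfolding X_def using card_image[OF injx] by simp
  have XS: "X \<inter> S = {}"
  proof (rule ccontr)
    assume "X \<inter> S \<noteq> {}"
    then obtain i z where i: "i < k - 1" "z = xi i" "z \<in> S" unfolding X_def by auto
    then obtain j where j: "j < k" "L ! j = z" using setL lenL by (metis in_set_conv_nth)
    have a1: "L ! i < L ! j" and a2: "L ! j < L ! Suc i" using xi[OF i(1)] i j by auto
    have "i < j"
    proof (rule ccontr)
      assume "\<not> i < j"
      then have "j \<le> i" by simp
      then have "L ! j \<le> L ! i" using Lmono[of j i] i(1) by (cases "i = j") (auto, linarith)
      then show False using a1 by simp
    qed
    moreover have "j < Suc i"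
    proof (rule ccontr)
      assume "\<not> j < Suc i"
      then have "Suc i \<le> j" by simp
      then have "L ! Suc i \<le> L ! j" using Lmono[of "Suc i" j] j(1) by (cases "Suc i = j") auto
      then show False using a2 by simp
    qed
    ultimately show False by simp
  qed
  have Xsub: "X \<subseteq> {c..d}"
  proof
    fix z assume "z \<in> X"
    then obtain i where i: "i < k - 1" "z = xi i" unfolding X_def by auto
    have "L ! i \<in> S" "L ! Suc i \<in> S" using i LS by auto
    then show "z \<in> {c..d}" using xi[OF i(1)] i by (auto simp: S_def)
  qed
  have finX: "finite X" unfolding X_def by simp
  have Ssub: "S \<subseteq> {c..d}" unfolding S_def by auto
  have ordS: "order z p = Suc (order z (pderiv p))" if "z \<in> S" for z
    using order_pderiv[OF p0] that by (auto simp: S_def)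
  have ordX: "1 \<le> order z (pderiv p)" if "z \<in> X" for z
  proof -
    obtain i where i: "i < k - 1" "z = xi i" using \<open>z \<in> X\<close> unfolding X_def by auto
    then have "poly (pderiv p) z = 0" using xi by auto
    then show ?thesis using p1 order_root by (metis less_one not_less)
  qed
  have "zc c d p = (\<Sum>z\<in>S. Suc (order z (pderiv p)))" unfolding zc_def S_def[symmetric]
    using ordS by (intro sum.cong) auto
  also have "\<dots> = (\<Sum>z\<in>S. order z (pderiv p)) + k" by (simp add: sum.distrib k_def sum_Suc)
  also have "(\<Sum>z\<in>X. 1) \<le> (\<Sum>z\<in>X. order z (pderiv p))" using ordX by (intro sum_mono) auto
  then have "k - 1 \<le> (\<Sum>z\<in>X. order z (pderiv p))" using cardX by simp
  then have "(\<Sum>z\<in>S. order z (pderiv p)) + k \<le> (\<Sum>z\<in>S. order z (pderiv p)) + (\<Sum>z\<in>X. order z (pderiv p)) + 1"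
    by linarith
  also have "\<dots> = (\<Sum>z\<in>S \<union> X. order z (pderiv p)) + 1"
    using XS finS finX by (subst sum.union_disjoint) auto
  also have "(\<Sum>z\<in>S \<union> X. order z (pderiv p)) \<le> zc c d (pderiv p)"
    using p1 finS finX Ssub Xsub by (intro zc_ge_subset) auto
  finally show ?thesis by simp
qed

lemma rolle_iter:
  assumes "(pderiv ^^ k) p \<noteq> 0"
  shows "zc c d p \<le> zc c d ((pderiv ^^ k) p) + k"
  using assms
proof (induction k)
  case 0 then show ?case by simp
next
  case (Suc k)
  have ne: "(pderiv ^^ k) p \<noteq> 0" using Suc.prems by (auto simp: pderiv_0)
  have "zc c d ((pderiv ^^ k) p) \<le> zc c d ((pderiv ^^ Suc k) p) + 1"
    using rolle_step[OF ne] Suc.prems by simp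
  then show ?case using Suc.IH[OF ne] by simp
qed

lemma rolle_gen:
  assumes "p \<noteq> 0" "k + 1 \<le> zc c d p" "c \<le> d"
  shows "\<exists>xi\<in>{c..d}. poly ((pderiv ^^ k) p) xi = 0"
proof (cases "(pderiv ^^ k) p = 0")
  case True then show ?thesis using assms by auto
next
  case False
  have "1 \<le> zc c d ((pderiv ^^ k) p)" using rolle_iter[OF False, of c d] assms by simp
  then have "{z. c \<le> z \<and> z \<le> d \<and> poly ((pderiv ^^ k) p) z = 0} \<noteq> {}"
    unfolding zc_def by (metis le_zero_eq not_one_le_zero sum.empty)
  then show ?thesis by auto
qed

lemma coeff_pderiv_iter:
  "coeff ((pderiv ^^ k) (p :: real poly)) i = (fact (i + k) / fact i) * coeff p (i + k)"
proof (induction k arbitrary: i)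
  case 0 then show ?case by simp
next
  case (Suc k)
  have "coeff ((pderiv ^^ Suc k) p) i = of_nat (Suc i) * coeff ((pderiv ^^ k) p) (Suc i)"
    by (simp add: coeff_pderiv)
  also have "\<dots> = of_nat (Suc i) * ((fact (Suc i + k) / fact (Suc i)) * coeff p (Suc i + k))"
    using Suc.IH by simp
  also have "\<dots> = (fact (i + Suc k) / fact i) * coeff p (i + Suc k)"
  proof -
    have f: "fact (Suc i) = of_nat (Suc i) * (fact i :: real)" by simp
    have e: "Suc i + k = i + Suc k" by simp
    show ?thesis unfolding f e by (simp del: of_nat_Suc)
  qed
  finally show ?case .
qed

lemma pderiv_iter_small:
  assumes "degree (p :: real poly) < k"
  shows "(pderiv ^^ k) p = 0"
proof (rule poly_eqI)
  fix i
  have "coeff p (i + k) = 0" using assms by (intro coeff_eq_0) auto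
  then show "coeff ((pderiv ^^ k) p) i = coeff 0 i" by (simp add: coeff_pderiv_iter)
qed

lemma pderiv_iter_monic:
  assumes "degree (p :: real poly) = m" "coeff p m = 1"
  shows "(pderiv ^^ m) p = [:fact m:]"
proof (rule poly_eqI)
  fix i
  show "coeff ((pderiv ^^ m) p) i = coeff [:fact m:] i"
  proof (cases i)
    case 0 then show ?thesis using assms by (simp add: coeff_pderiv_iter)
  next
    case (Suc j)
    have "coeff p (i + m) = 0" using assms Suc by (intro coeff_eq_0) auto
    then show ?thesis using Suc by (simp add: coeff_pderiv_iter)
  qed
qed

lemma poly_sum_le:
  assumes "degree (p :: real poly) \<le> M"
  shows "poly p x = (\<Sum>i\<le>M. coeff p i * x ^ i)"
  unfolding poly_altdef using assms
  by (intro sum.mono_neutral_left) (auto simp: coeff_eq_0)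

definition tp :: "real \<Rightarrow> nat \<Rightarrow> real poly" where
  "tp t N = (\<Sum>j\<le>N. monom ((-t)^j / fact j) j)"

lemma coeff_tp: "coeff (tp t N) j = (if j \<le> N then (-t)^j / fact j else 0)"
  unfolding tp_def by (simp add: coeff_sum coeff_monom)

lemma poly_tp: "poly (tp t N) x = (\<Sum>j\<le>N. (-t*x)^j / fact j)"
proof -
  have "poly (tp t N) x = (\<Sum>j\<le>N. (-t)^j / fact j * x^j)"
    unfolding tp_def by (simp add: poly_sum poly_monom)
  also have "\<dots> = (\<Sum>j\<le>N. (-t*x)^j / fact j)"
    by (intro sum.cong refl) (metis power_mult_distrib mult_minus_left times_divide_eq_left mult.commute)
  finally show ?thesis .
qed

lemma poly_tp_deriv:
  "poly ((pderiv ^^ k) (tp t (K + k))) u = (-t)^k * (\<Sum>i\<le>K. (-t*u)^i / fact i)"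
proof -
  let ?D = "(pderiv ^^ k) (tp t (K + k))"
  have c: "coeff ?D i = (if i \<le> K then (-t)^(i+k) / fact i else 0)" for i
    by (simp add: coeff_pderiv_iter coeff_tp)
  have "degree ?D \<le> K" by (rule degree_le) (simp add: c)
  then have "poly ?D u = (\<Sum>i\<le>K. coeff ?D i * u ^ i)" by (rule poly_sum_le)
  also have "\<dots> = (\<Sum>i\<le>K. (-t)^k * ((-t*u)^i / fact i))"
  proof (intro sum.cong refl)
    fix i assume "i \<in> {..K}"
    then show "coeff ?D i * u ^ i = (-t)^k * ((-t*u)^i / fact i)"
      using power_mult_distrib[of "-t" u i] by (simp add: c power_add)
  qed
  finally show ?thesis by (simp add: sum_distrib_left)
qed

definition eps :: "real \<Rightarrow> nat \<Rightarrow> real" where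
  "eps B K = exp B * B^(K+1) / fact (K+1)"

lemma exp_partial_err:
  fixes y :: real
  assumes "\<bar>y\<bar> \<le> B"
  shows "\<bar>exp y - (\<Sum>i\<le>K. y^i / fact i)\<bar> \<le> eps B K"
proof -
  obtain th where th: "\<bar>th\<bar> \<le> \<bar>y\<bar>" "exp y = (\<Sum>m<Suc K. y ^ m / fact m) + exp th / fact (Suc K) * y ^ Suc K"
    using Maclaurin_exp_le[of y "Suc K"] by blast
  have "\<bar>exp y - (\<Sum>i\<le>K. y^i / fact i)\<bar> = exp th / fact (Suc K) * \<bar>y\<bar> ^ Suc K"
    using th by (simp add: lessThan_Suc_atMost abs_mult power_abs)
  also have "\<dots> \<le> exp B / fact (Suc K) * B ^ Suc K"
    using th assms by (intro mult_mono divide_right_mono power_mono) auto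
  finally show ?thesis by (simp add: eps_def)
qed

lemma eps_lim: "eps B \<longlonglongrightarrow> 0"
proof -
  have "(\<lambda>n. inverse (fact n) * B ^ n) \<longlonglongrightarrow> 0" by (rule summable_LIMSEQ_zero[OF summable_exp])
  then have "(\<lambda>n. inverse (fact (Suc n)) * B ^ (Suc n)) \<longlonglongrightarrow> 0" by (rule LIMSEQ_Suc)
  then have "(\<lambda>n. exp B * (inverse (fact (Suc n)) * B ^ (Suc n))) \<longlonglongrightarrow> exp B * 0"
    by (intro tendsto_mult tendsto_const)
  then show ?thesis unfolding eps_def by (simp add: field_simps)
qed

lemma exp_partial_lim: "(\<lambda>K. \<Sum>i\<le>K. y^i / fact i) \<longlonglongrightarrow> exp (y::real)"
proof -
  have "(\<lambda>n. y^n /\<^sub>R fact n) sums exp y" by (rule exp_converges)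
  then have "(\<lambda>n. \<Sum>i<n. y^i /\<^sub>R fact i) \<longlonglongrightarrow> exp y" by (simp add: sums_def)
  then have "(\<lambda>n. \<Sum>i<Suc n. y^i /\<^sub>R fact i) \<longlonglongrightarrow> exp y" by (rule LIMSEQ_Suc)
  then show ?thesis by (simp add: lessThan_Suc_atMost divide_inverse mult.commute real_scaleR_def)
qed

lemma exp_partial_abs_le:
  fixes y :: real
  assumes "y \<ge> 0"
  shows "\<bar>\<Sum>i\<le>K. (-y)^i / fact i\<bar> \<le> exp y"
proof -
  have "\<bar>\<Sum>i\<le>K. (-y)^i / fact i\<bar> \<le> (\<Sum>i\<le>K. \<bar>(-y)^i / fact i\<bar>)" by (rule sum_abs)
  also have "\<dots> = (\<Sum>i\<le>K. y^i / fact i)" using assms by (simp add: power_abs)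
  also have "\<dots> \<le> exp y"
  proof -
    obtain th where th: "exp y = (\<Sum>m<Suc K. y ^ m / fact m) + exp th / fact (Suc K) * y ^ Suc K"
      using Maclaurin_exp_le[of y "Suc K"] by blast
    have "0 \<le> exp th / fact (Suc K) * y ^ Suc K" using assms by simp
    then show ?thesis using th by (simp add: lessThan_Suc_atMost)
  qed
  finally show ?thesis .
qed

fun chv :: "real \<Rightarrow> nat \<Rightarrow> real poly" where
  "chv a 0 = [:2:]"
| "chv a (Suc 0) = [:-a/2, 1:]"
| "chv a (Suc (Suc m)) = [:-a/2, 1:] * chv a (Suc m) - smult (a^2/16) (chv a m)"

lemma chv_cos: "poly (chv a m) (a/2 + a/2 * cos th) = 2 * (a/4)^m * cos (real m * th)"
proof (induction a m rule: chv.induct)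
  case (1 a) then show ?case by simp
next
  case (2 a) then show ?case by (simp add: field_simps)
next
  case (3 a m)
  have c: "cos (real (Suc (Suc m)) * th) = 2 * cos th * cos (real (Suc m) * th) - cos (real m * th)"
  proof -
    have "cos (real (Suc m) * th + th) + cos (real (Suc m) * th - th) = 2 * cos th * cos (real (Suc m) * th)"
      by (simp add: cos_add cos_diff)
    moreover have "real (Suc m) * th + th = real (Suc (Suc m)) * th" "real (Suc m) * th - th = real m * th"
      by (simp_all add: field_simps)
    ultimately show ?thesis by simp
  qed
  let ?y = "a/2 + a/2 * cos th"
  have "poly (chv a (Suc (Suc m))) ?y = (a/2*cos th) * poly (chv a (Suc m)) ?y - a^2/16 * poly (chv a m) ?y"
    by (simp add: algebra_simps)
  also have "\<dots> = (a/2*cos th) * (2 * (a/4)^(Suc m) * cos (real (Suc m) * th)) - a^2/16 * (2 * (a/4)^m * cos (real m * th))"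
    using 3 by simp
  also have "\<dots> = 2 * (a/4)^(Suc (Suc m)) * (2 * cos th * cos (real (Suc m) * th) - cos (real m * th))"
    by (simp only: power_Suc power2_eq_square) (simp add: algebra_simps)
  finally show ?case by (simp only: c)
qed

lemma chv_deg: "degree (chv a m) \<le> m \<and> coeff (chv a m) m = (if m = 0 then 2 else 1)"
proof (induction a m rule: chv.induct)
  case (1 a) then show ?case by simp
next
  case (2 a) then show ?case by simp
next
  case (3 a m)
  let ?p = "chv a (Suc m)"
  have e: "[:-a/2, 1:] * ?p = smult (-a/2) ?p + pCons 0 ?p" by (simp add: mult_pCons_left)
  have d1: "degree ([:-a/2, 1:] * ?p) \<le> Suc (Suc m)"
    using degree_mult_le[of "[:-a/2, 1:]" ?p] 3 by simp
  have d2: "degree (smult (a^2/16) (chv a m)) \<le> Suc (Suc m)"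
    using 3 by (meson degree_smult_le le_Suc_eq order_trans)
  have "degree (chv a (Suc (Suc m))) \<le> Suc (Suc m)"
    using d1 d2 by (simp add: degree_diff_le)
  moreover have "coeff ?p (Suc (Suc m)) = 0" using 3 by (intro coeff_eq_0) auto
  moreover have "coeff (chv a m) (Suc (Suc m)) = 0" using 3 by (intro coeff_eq_0) auto
  ultimately show ?case using 3 by (simp add: e)
qed

lemma chv_bound:
  assumes "a > 0" "0 \<le> y" "y \<le> a"
  shows "\<bar>poly (chv a m) y\<bar> \<le> 2 * (a/4)^m"
proof -
  define th where "th = arccos (2*y/a - 1)"
  have "-1 \<le> 2*y/a - 1" "2*y/a - 1 \<le> 1" using assms by (auto simp: field_simps)
  then have "cos th = 2*y/a - 1" unfolding th_def by (simp add: cos_arccos)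
  then have "y = a/2 + a/2 * cos th" using assms by (simp add: field_simps)
  then have "poly (chv a m) y = 2 * (a/4)^m * cos (real m * th)" using chv_cos by simp
  then have "\<bar>poly (chv a m) y\<bar> = 2 * (a/4)^m * \<bar>cos (real m * th)\<bar>" using assms by (simp add: abs_mult)
  also have "\<dots> \<le> 2 * (a/4)^m * 1" using assms by (intro mult_left_mono) auto
  finally show ?thesis by simp
qed

lemma fact_lower:
  assumes "m \<ge> 1"
  shows "exp 1 * (real m / exp 1) ^ m \<le> fact m"
  using assms
proof (induction m rule: dec_induct)
  case base then show ?case by simp
next
  case (step m)
  have m1: "real m \<ge> 1" using step by simp
  have "(1 + 1 / real m) ^ m \<le> exp (1 / real m) ^ m"
    using m1 by (intro power_mono) (auto simp: exp_ge_add_one_self add.commute)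
  also have "\<dots> = exp 1" using m1 by (simp add: exp_of_nat_mult[symmetric])
  finally have k: "(1 + 1 / real m) ^ m \<le> exp 1" .
  have "(real m + 1) ^ m = (1 + 1 / real m) ^ m * real m ^ m"
  proof -
    have "(1 + 1 / real m) * real m = real m + 1" using m1 by (simp add: field_simps)
    then have "(real m + 1) ^ m = ((1 + 1 / real m) * real m) ^ m" by simp
    then show ?thesis by (simp only: power_mult_distrib)
  qed
  also have "\<dots> \<le> exp 1 * real m ^ m" using k by (intro mult_right_mono) auto
  finally have k2: "(real m + 1) ^ m \<le> exp 1 * real m ^ m" .
  have "exp 1 * (real (Suc m) / exp 1) ^ Suc m = (real m + 1) ^ m * (real m + 1) / exp 1 ^ m"
    unfolding power_divide power_Suc by (simp add: add.commute)
  also have "\<dots> \<le> exp 1 * real m ^ m * (real m + 1) / exp 1 ^ m"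
    using k2 by (intro divide_right_mono mult_right_mono) auto
  also have "\<dots> = (real m + 1) * (exp 1 * (real m / exp 1) ^ m)"
    unfolding power_divide by simp
  also have "\<dots> \<le> (real m + 1) * fact m" using step by (intro mult_left_mono) auto
  also have "\<dots> = fact (Suc m)" by simp
  finally show ?case .
qed

lemma sqrt_pi_ge: "sqrt pi \<ge> 1.77"
proof -
  have "1.77 ^ 2 \<le> pi" using pi_approx by (simp add: power2_eq_square)
  then have "sqrt (1.77 ^ 2) \<le> sqrt pi" by (rule real_sqrt_le_mono)
  then show ?thesis by simp
qed

lemma sqrt_ge_of: "x \<ge> 0 \<Longrightarrow> c \<ge> 0 \<Longrightarrow> c^2 \<le> x \<Longrightarrow> sqrt x \<ge> (c::real)"
  using real_sqrt_le_mono[of "c^2" x] by simp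

lemma core_ineq:
  fixes n :: nat
  assumes "n \<ge> 2"
  shows "8 * exp 1 * (2 * real n + 1) < sqrt pi * (2 * real n - 1) * real n powr (3/2)
            * (2 * real n / (2 * real n - 1)) ^ (4 * n)"
proof -
  have e: "exp 1 < (2.72::real)" using e_less_272 by simp
  have sp: "sqrt pi \<ge> 1.77" by (rule sqrt_pi_ge)
  have u: "real n powr (3/2) = real n * sqrt (real n)"
  proof -
    have "real n powr (3/2) = real n powr (1 + 1/2)" by simp
    also have "\<dots> = real n powr 1 * real n powr (1/2)" by (rule powr_add)
    also have "\<dots> = real n * sqrt (real n)" using assms by (simp add: powr_half_sqrt)
    finally show ?thesis .
  qed
  show ?thesis
  proof (cases "n = 2")
    case True
    have s2: "sqrt 2 \<ge> (1.41::real)" by (rule sqrt_ge_of) (auto simp: power2_eq_square)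
    have r: "(2 * real n / (2 * real n - 1)) ^ (4 * n) = 65536 / 6561" using True by (simp add: power_divide)
    have "8 * exp 1 * (2 * real n + 1) < 8 * 2.72 * 5" using True e by simp
    also have "\<dots> \<le> 1.77 * 3 * (2 * 1.41) * (65536 / 6561)" by simp
    also have "\<dots> \<le> sqrt pi * 3 * (2 * sqrt 2) * (65536 / 6561)"
      using sp s2 by (intro mult_right_mono mult_mono) auto
    moreover have r': "(4/3::real)^8 = 65536/6561" by (simp add: power_divide)
    ultimately show ?thesis using True u by (simp add: mult.assoc r')
  next
    case False
    then have n3: "n \<ge> 3" using assms by simp
    define m where "m = 2 * n - 1"
    have mr: "real m = 2 * real n - 1" using assms unfolding m_def by (simp add: of_nat_diff)
    have mpos: "real m > 0" using mr assms by simp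
    have base: "2 * real n / (2 * real n - 1) = 1 + 1 / real m" using mr mpos by (simp add: field_simps)
    have b1: "1 \<le> 1 + 1 / real m" using mpos by simp
    have "(1 + 1 / real m) ^ (2 * m) \<le> (1 + 1 / real m) ^ (4 * n)"
      using b1 unfolding m_def by (intro power_increasing) auto
    moreover have "(1 + 1 / real m) ^ (2 * m) = ((1 + 1 / real m) ^ m)^2"
      by (simp add: power_mult[symmetric] mult.commute)
    moreover have "2 \<le> (1 + 1 / real m) ^ m"
    proof -
      have "-1 \<le> 1 / real m" using mpos by (smt (verit) divide_nonneg_nonneg of_nat_0_le_iff)
      then show ?thesis using Bernoulli_inequality[of "1 / real m" m] mpos by simp
    qed
    ultimately have r4: "4 \<le> (2 * real n / (2 * real n - 1)) ^ (4 * n)"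
    proof -
      assume h1: "(1 + 1 / real m) ^ (2 * m) \<le> (1 + 1 / real m) ^ (4 * n)"
        and h2: "(1 + 1 / real m) ^ (2 * m) = ((1 + 1 / real m) ^ m)^2"
        and h3: "2 \<le> (1 + 1 / real m) ^ m"
      have "(2::real)^2 \<le> ((1 + 1 / real m) ^ m)^2" using h3 by (intro power_mono) auto
      then show ?thesis unfolding base using h1 h2 by simp
    qed
    have s3: "sqrt (real n) \<ge> 1.73" using n3 by (intro sqrt_ge_of) (auto simp: power2_eq_square)
    have "8 * exp 1 * (2 * real n + 1) < 8 * 2.72 * (2 * real n + 1)" using e by (intro mult_strict_right_mono) auto
    also have "\<dots> \<le> 1.77 * (2 * real n - 1) * (real n * 1.73) * 4"
    proof -
      have h: "(2*real n - 1) * real n \<ge> (2*real n - 1) * 3" using n3 by (intro mult_left_mono) auto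
      have eq: "1.77 * (2 * real n - 1) * (real n * 1.73) * 4 = 12.2484 * ((2 * real n - 1) * real n)" by simp
      have l: "8 * 2.72 * (2*real n + 1) \<le> 12.2484 * ((2*real n - 1)*3)" using n3 by simp
      have "12.2484 * ((2*real n - 1)*3) \<le> 12.2484 * ((2 * real n - 1) * real n)"
        by (rule mult_left_mono[OF h]) simp
      then show ?thesis unfolding eq using l by linarith
    qed
    also have "\<dots> \<le> sqrt pi * (2 * real n - 1) * (real n * sqrt (real n)) * (2 * real n / (2 * real n - 1)) ^ (4 * n)"
      using sp s3 r4 n3 by (intro mult_mono) auto
    finally show ?thesis using u by simp
  qed
qed



lemma frac_lt: "b > 0 \<Longrightarrow> d > 0 \<Longrightarrow> a * d < c * b \<Longrightarrow> a / b < (c::real) / d"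
  by (simp add: divide_less_eq less_divide_eq field_simps)

lemma middle_ineq:
  fixes n :: nat
  assumes "n \<ge> 2"
  shows "32 / (16^n * (exp 1 * (2 * real n / exp 1)^(2*n)))
     < 4 * sqrt pi / (exp 1)^2 * ((2 * real n - 1) * real n powr (3/2) / (2 * real n + 1))
       * (exp 1 * real n / (2 * (2 * real n - 1)^2))^(2*n)"
proof -
  define e where "e = exp (1::real)"
  define u where "u = real n"
  define m where "m = 2 * u - 1"
  define s where "s = u powr (3/2)"
  define sp where "sp = sqrt pi"
  define A where "A = e^(2*n)"
  define C where "C = u^(2*n)"
  define D where "D = m^(2*n)"
  define G where "G = (2::real)^(2*n)"
  have pos: "e > 0" "u > 0" "m > 0" "s > 0" "sp > 0" "A > 0" "C > 0" "D > 0" "G > 0"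
    using assms by (auto simp: e_def u_def m_def s_def sp_def A_def C_def D_def G_def)
  have core: "8 * e * (2 * u + 1) < sp * m * s * (2 * u / m) ^ (4 * n)"
    using core_ineq[OF assms] unfolding e_def u_def m_def s_def sp_def by simp
  have r1: "(2 * u / m) ^ (4 * n) = G^2 * C^2 / D^2"
  proof -
    have "4 * n = 2 * n * 2" by simp
    then have "(2 * u / m) ^ (4 * n) = ((2 * u / m) ^ (2 * n))^2" by (simp only: power_mult)
    then show ?thesis unfolding G_def C_def D_def by (simp only: power_divide power_mult_distrib)
  qed
  have r2: "(2 * u / e)^(2*n) = G * C / A"
    unfolding G_def C_def A_def by (simp only: power_divide power_mult_distrib)
  have r3: "(e * u / (2 * m^2))^(2*n) = A * C / (G * D^2)"
  proof -
    have "(m^2)^(2*n) = (m^(2*n))^2" by (simp only: power_mult[symmetric] mult.commute)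
    then show ?thesis unfolding G_def C_def A_def D_def by (simp only: power_divide power_mult_distrib)
  qed
  have r4: "(16::real)^n = G^2"
  proof -
    have "(16::real)^n = 2^(4*n)" by (simp add: power_mult)
    also have "\<dots> = (2^(2*n))^2" by (simp add: power_mult[symmetric] mult.commute)
    finally show ?thesis unfolding G_def .
  qed
  have core2: "8 * e * (2 * u + 1) * D^2 < sp * m * s * G^2 * C^2"
  proof -
    have "8 * e * (2 * u + 1) * D^2 < sp * m * s * (G^2 * C^2 / D^2) * D^2"
      using core r1 pos by (intro mult_strict_right_mono) auto
    also have "\<dots> = sp * m * s * G^2 * C^2" using pos by simp
    finally show ?thesis .
  qed
  have lhs: "32 / (16^n * (e * (2 * u / e)^(2*n))) = 32 * A / (G^2 * e * G * C)"
    unfolding r2 r4 using pos by (simp add: field_simps)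
  have rhs: "4 * sp / e^2 * (m * s / (2 * u + 1)) * (e * u / (2 * m^2))^(2*n)
       = 4 * sp * m * s * A * C / (e^2 * (2 * u + 1) * G * D^2)"
    unfolding r3 using pos by (simp add: field_simps)
  have "32 * A / (G^2 * e * G * C) < 4 * sp * m * s * A * C / (e^2 * (2 * u + 1) * G * D^2)"
  proof -
    have d1: "G^2 * e * G * C > 0" "e^2 * (2 * u + 1) * G * D^2 > 0" using pos by auto
    have "32 * A * (e^2 * (2 * u + 1) * G * D^2) = (4 * A * e * G) * (8 * e * (2 * u + 1) * D^2)"
      by (simp add: power2_eq_square algebra_simps)
    also have "\<dots> < (4 * A * e * G) * (sp * m * s * G^2 * C^2)"
      using core2 pos by (intro mult_strict_left_mono) auto
    also have "\<dots> = 4 * sp * m * s * A * C * (G^2 * e * G * C)"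
      by (simp add: power2_eq_square algebra_simps)
    finally show ?thesis using d1 by (intro frac_lt) auto
  qed
  then show ?thesis using lhs rhs unfolding e_def u_def m_def s_def sp_def by simp
qed

definition lin :: "real \<Rightarrow> real poly" where "lin y = [:-y, 1:]"

lemma lin_nz: "lin y \<noteq> 0" by (simp add: lin_def)

lemma pderiv_iter_0: "(pderiv ^^ k) (0 :: real poly) = 0"
  by (induction k) (auto simp: pderiv_0)

lemma pderiv_iter_diff: "(pderiv ^^ k) (p - q :: real poly) = (pderiv ^^ k) p - (pderiv ^^ k) q"
  by (induction k) (auto simp: pderiv_diff)

lemma pderiv_iter_smult: "(pderiv ^^ k) (smult c p :: real poly) = smult c ((pderiv ^^ k) p)"
  by (induction k) (auto simp: pderiv_smult)

lemma linprod_nz: "prod_list (map lin zs) \<noteq> 0"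
  by (auto simp: prod_list_zero_iff lin_nz)

lemma order_lin: "order z (lin y) = (if z = y then 1 else 0)"
proof (cases "z = y")
  case True then show ?thesis using order_power_n_n[of y 1] by (simp add: lin_def)
next
  case False
  have "poly (lin y) z \<noteq> 0" using False by (simp add: lin_def)
  then show ?thesis using False order_root[of "lin y" z] by auto
qed

lemma order_linprod: "order z (prod_list (map lin zs)) = count_list zs z"
proof (induction zs)
  case Nil
  have "order z (1 :: real poly) = 0" using order_root[of "1::real poly" z] by simp
  then show ?case by simp
next
  case (Cons y ys)
  have "order z (prod_list (map lin (y # ys))) = order z (lin y) + order z (prod_list (map lin ys))"
    using linprod_nz[of "y # ys"] by (simp add: order_mult)
  then show ?case using Cons by (simp add: order_lin)
qed

lemma linprod_monic: "degree (prod_list (map lin zs)) = length zs \<and> coeff (prod_list (map lin zs)) (length zs) = 1"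
proof (induction zs)
  case Nil then show ?case by simp
next
  case (Cons y ys)
  let ?P = "prod_list (map lin ys)"
  have dl: "degree (lin y) = 1" "lead_coeff (lin y) = 1" by (simp_all add: lin_def)
  have d: "degree (lin y * ?P) = Suc (length ys)"
    using Cons linprod_nz[of ys] lin_nz[of y] dl by (simp add: degree_mult_eq)
  have "lead_coeff (lin y * ?P) = 1"
    using Cons dl by (simp add: lead_coeff_mult)
  then show ?case using d by simp
qed

lemma zc_linprod:
  assumes "p \<noteq> 0" "prod_list (map lin zs) dvd p" "set zs \<subseteq> {c..d}"
  shows "length zs \<le> zc c d p"
proof -
  have "length zs = (\<Sum>z\<in>set zs. count_list zs z)" by (simp add: sum_count_set)
  also have "\<dots> = (\<Sum>z\<in>set zs. order z (prod_list (map lin zs)))" by (simp add: order_linprod)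
  also have "\<dots> \<le> (\<Sum>z\<in>set zs. order z p)"
    using assms by (intro sum_mono dvd_imp_order_le) auto
  also have "\<dots> \<le> zc c d p" using assms by (intro zc_ge_subset) auto
  finally show ?thesis .
qed

lemma powr_mult_pow:
  fixes x :: real
  assumes "x \<ge> 0" "b > 0"
  shows "x ^ i * x powr (b - 1) = x powr (real i + b - 1)"
proof (cases "x = 0")
  case True then show ?thesis using assms by (cases i) auto
next
  case False
  then have "x > 0" using assms by simp
  then have "x ^ i * x powr (b - 1) = x powr (real i + (b - 1))"
    by (simp add: powr_realpow[symmetric] powr_add[symmetric])
  moreover have "real i + (b - 1) = real i + b - 1" by simp
  ultimately show ?thesis by metis
qed

lemma int_poly:
  fixes al a :: real
  assumes "al > 0"
  shows "(\<lambda>x. poly p x * x powr (al - 1)) integrable_on {0..a}"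
proof (cases "a \<ge> 0")
  case False
  then have "{0..a} = {}" by auto
  then show ?thesis using integrable_on_empty by metis
next
  case True
  have e: "poly p x * x powr (al - 1) = (\<Sum>i\<le>degree p. coeff p i * x powr (real i + al - 1))"
    if "x \<in> {0..a}" for x
  proof -
    have "poly p x * x powr (al - 1) = (\<Sum>i\<le>degree p. coeff p i * (x ^ i * x powr (al - 1)))"
      by (simp add: poly_altdef sum_distrib_right mult.assoc)
    also have "\<dots> = (\<Sum>i\<le>degree p. coeff p i * x powr (real i + al - 1))"
      using that assms by (intro sum.cong refl) (simp add: powr_mult_pow)
    finally show ?thesis .
  qed
  have "(\<lambda>x. \<Sum>i\<le>degree p. coeff p i * x powr (real i + al - 1)) integrable_on {0..a}"
  proof (intro integrable_sum)
    fix i assume "i \<in> {..degree p}"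
    have "(\<lambda>x. x powr (real i + al - 1)) integrable_on {0..a}"
      using has_integral_powr_from_0[of "real i + al - 1" a] assms True by auto
    then show "(\<lambda>x. coeff p i * x powr (real i + al - 1)) integrable_on {0..a}"
      using integrable_cmul[OF \<open>(\<lambda>x. x powr (real i + al - 1)) integrable_on {0..a}\<close>, of "coeff p i"]
      by (simp add: real_scaleR_def)
  qed auto
  then show ?thesis by (rule integrable_eq) (use e in auto)
qed

lemma poly_linprod_root:
  assumes "y \<in> set zs"
  shows "poly (prod_list (map lin zs)) y = 0"
  using assms by (induction zs) (auto simp: lin_def)

lemma nodes_nonneg:
  assumes a: "a > 0" and al: "0 < \<alpha>" and n1: "n > 1" and rule: "gauss_jacobi_rule a \<alpha> n s w"
    and j: "j \<in> {1..n}"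
  shows "s j \<ge> 0"
proof (rule ccontr)
  assume neg: "\<not> s j \<ge> 0"
  define ns where "ns = map s [1..<Suc n]"
  define om where "om = prod_list (map lin ns)"
  have om_nz: "om \<noteq> 0" unfolding om_def by (rule linprod_nz)
  have om_deg: "degree om = n" unfolding om_def using linprod_monic[of ns] by (simp add: ns_def)
  have om_root: "poly om (s k) = 0" if "k \<in> {1..n}" for k
    unfolding om_def using that by (intro poly_linprod_root) (auto simp: ns_def simp del: upt_Suc)
  have "lin (s j) dvd om" using om_root[OF j] by (simp add: lin_def poly_eq_0_iff_dvd)
  then obtain oj where oj: "om = lin (s j) * oj" by (auto elim: dvdE)
  have oj_nz: "oj \<noteq> 0" using om_nz oj by auto
  have "degree om = degree (lin (s j)) + degree oj" using oj oj_nz lin_nz by (simp add: degree_mult_eq)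
  then have oj_deg: "degree oj = n - 1" using om_deg by (simp add: lin_def)
  define p where "p = om * oj"
  have "degree p \<le> 2 * n - 1" unfolding p_def using degree_mult_le[of om oj] om_deg oj_deg n1 by simp
  then have hi: "((\<lambda>x. poly p x * x powr (\<alpha> - 1)) has_integral (\<Sum>k = 1..n. w k * poly p (s k))) {0..a}"
    using rule unfolding gauss_jacobi_rule_def by blast
  have "(\<Sum>k = 1..n. w k * poly p (s k)) = 0" using om_root by (simp add: p_def)
  with hi have hi0: "((\<lambda>x. poly p x * x powr (\<alpha> - 1)) has_integral 0) {0..a}" by simp
  define g where "g = (\<lambda>x. poly p x * x powr (\<alpha> - 1))"
  have pp: "poly p x = (x - s j) * (poly oj x)^2" for x
    unfolding p_def oj by (simp add: lin_def power2_eq_square algebra_simps)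
  have gnn: "g x \<ge> 0" if "x \<ge> 0" for x
    unfolding g_def pp using neg that by (intro mult_nonneg_nonneg) auto
  have gi: "g integrable_on {0..a}" using hi0 unfolding g_def by blast
  have gi2: "g integrable_on {a/2..a}" using a by (intro integrable_on_subinterval[OF gi]) auto
  have "integral {a/2..a} g \<le> integral {0..a} g"
    using gi gi2 gnn a by (intro integral_subset_le) auto
  also have "integral {0..a} g = 0" using hi0 unfolding g_def by (rule integral_unique)
  finally have "integral {a/2..a} g \<le> 0" .
  moreover have "integral {a/2..a} g \<ge> 0" using gi2 gnn a by (intro integral_nonneg) auto
  ultimately have "integral {a/2..a} g = 0" by simp
  then have h0: "(g has_integral 0) (cbox (a/2) a)" using gi2 integrable_integral by (fastforce simp: cbox_interval)
  have cont: "continuous_on (cbox (a/2) a) g"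
    unfolding g_def cbox_interval using a
    by (intro continuous_intros continuous_on_powr') auto
  have z: "poly oj x = 0" if "x \<in> {a/2..a}" for x
  proof -
    have "g x = 0" using has_integral_0_cbox_imp_0[OF cont _ h0] that a gnn
      by (auto simp: cbox_interval box_real)
    moreover have "x powr (\<alpha> - 1) > 0" "x - s j > 0" using that a neg by auto
    ultimately show ?thesis unfolding g_def pp by simp
  qed
  have "{a/2..a} \<subseteq> {x. poly oj x = 0}" using z by auto
  moreover have "finite {x. poly oj x = 0}" using oj_nz by (rule poly_roots_finite)
  ultimately have "finite {a/2..a}" by (rule finite_subset)
  moreover have "infinite {a/2..a}" using a by (intro infinite_Icc) simp
  ultimately show False by simp
qed

lemma aux_reorder: "(4 * p * A / E) * B * (C * X) = A * C * (4 * p / E * B * (X::real))"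
  by (simp add: divide_inverse mult_ac)

lemma final_arith:
  fixes a T \<alpha> :: real and n :: nat
  assumes a: "a > 0" and T: "T > 0" and al: "0 < \<alpha>" "\<alpha> < 1" and n: "n \<ge> 2"
  shows "T^(2*n) / fact (2*n) * (4 * (a/4)^(2*(n-1)) * (a powr (\<alpha>+2) / (\<alpha>+2)))
    < 4 * sqrt pi * a powr \<alpha> / exp 2
           * ((2 * real n - 1) * real n powr (3 / 2) / (2 * real n + \<alpha>))
           * (a * exp 1 * real n * T / (2 * (2 * real n - 1)^2)) ^ (2 * n)"
proof -
  define F where "F = (fact (2*n) :: real)"
  define e where "e = exp (1::real)"
  define u where "u = real n"
  define m where "m = 2 * u - 1"
  define s where "s = u powr (3/2)"
  define Q where "Q = a powr \<alpha> * (a * T)^(2*n)"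
  have pos: "F > 0" "e > 0" "u > 0" "m > 0" "s > 0" "Q > 0" "sqrt pi > 0"
    using a T n by (auto simp: F_def e_def u_def m_def s_def Q_def)
  have Fl: "e * (2 * u / e)^(2*n) \<le> F"
    using fact_lower[of "2*n"] n unfolding F_def e_def u_def by simp
  have Flpos: "e * (2 * u / e)^(2*n) > 0" using pos by simp
  obtain k where k: "n = Suc k" using n by (cases n) auto
  have lhs: "T^(2*n) / fact (2*n) * (4 * (a/4)^(2*(n-1)) * (a powr (\<alpha>+2) / (\<alpha>+2)))
       = Q * (64 / (16^n * F * (\<alpha> + 2)))"
  proof -
    have p1: "a powr (\<alpha>+2) = a powr \<alpha> * a^2" using a by (simp add: powr_add)
    have p2: "(a/4)^(2*k) = (a^2)^k / 16^k"
      by (simp add: power_mult power_divide)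
    have p3: "(a * T)^(2*n) = (a^2)^k * a^2 * T^(2*n)"
    proof -
      have nn: "2*n = 2*k + 2" by (simp add: k)
      have "a^(2*n) = a^(2*k) * a^2" by (simp only: nn power_add)
      moreover have "a^(2*k) = (a^2)^k" by (simp add: power_mult)
      ultimately show ?thesis by (simp add: power_mult_distrib)
    qed
    have p4: "(16::real)^n = 16^k * 16" unfolding k by simp
    define A2 where "A2 = (a^2)^k"
    define S where "S = (16::real)^k"
    define TT where "TT = T^(2*n)"
    define P where "P = a powr \<alpha>"
    have "T^(2*n) / fact (2*n) * (4 * (a/4)^(2*(n-1)) * (a powr (\<alpha>+2) / (\<alpha>+2)))
       = TT / F * (4 * (A2 / S) * (P * a^2 / (\<alpha>+2)))"
      unfolding TT_def F_def p1 A2_def S_def P_def using p2 k by simp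
    also have "\<dots> = (P * (A2 * a^2 * TT)) * (64 / ((S * 16) * F * (\<alpha> + 2)))"
    proof -
      define Dd where "Dd = \<alpha> + 2"
      have "(64::real) / ((S * 16) * F * Dd) = 4 / (S * F * Dd)" by simp
      moreover have "TT / F * (4 * (A2 / S) * (P * a^2 / Dd)) = (P * (A2 * a^2 * TT)) * (4 / (S * F * Dd))"
        by (simp add: mult_ac)
      ultimately have "TT / F * (4 * (A2 / S) * (P * a^2 / Dd)) = (P * (A2 * a^2 * TT)) * (64 / ((S * 16) * F * Dd))"
        by simp
      then show ?thesis unfolding Dd_def .
    qed
    finally show ?thesis unfolding Q_def p3 p4 A2_def S_def TT_def P_def by simp
  qed
  have ex2: "exp 2 = e^2" unfolding e_def by (simp add: power2_eq_square exp_add[symmetric])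
  have rhs: "4 * sqrt pi * a powr \<alpha> / exp 2
           * ((2 * real n - 1) * real n powr (3 / 2) / (2 * real n + \<alpha>))
           * (a * exp 1 * real n * T / (2 * (2 * real n - 1)^2)) ^ (2 * n)
       = Q * (4 * sqrt pi / e^2 * (m * s / (2 * u + \<alpha>)) * (e * u / (2 * m^2))^(2*n))"
  proof -
    have eq: "a * exp 1 * real n * T / (2 * (2 * real n - 1)^2) = (a * T) * (e * u / (2 * m^2))"
      unfolding e_def u_def m_def by simp
    have "(a * exp 1 * real n * T / (2 * (2 * real n - 1)^2)) ^ (2 * n) = ((a * T) * (e * u / (2 * m^2))) ^ (2 * n)"
      by (simp only: eq)
    also have "\<dots> = (a*T)^(2*n) * (e * u / (2 * m^2))^(2*n)" by (rule power_mult_distrib)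
    finally have "(a * exp 1 * real n * T / (2 * (2 * real n - 1)^2)) ^ (2 * n) = (a*T)^(2*n) * (e * u / (2 * m^2))^(2*n)" .
    then show ?thesis unfolding ex2 Q_def u_def[symmetric] m_def[symmetric] s_def[symmetric]
      by (simp only: ) (rule aux_reorder)
  qed
  have "64 / (16^n * F * (\<alpha> + 2)) \<le> 32 / (16^n * F)"
  proof -
    define X where "X = 16^n * F"
    have X: "X > 0" using pos unfolding X_def by simp
    have "64 / (X * (\<alpha> + 2)) \<le> 64 / (X * 2)"
      using X al by (intro divide_left_mono mult_left_mono mult_pos_pos) auto
    also have "\<dots> = 32 / X" by simp
    finally show ?thesis unfolding X_def by simp
  qed
  also have "\<dots> \<le> 32 / (16^n * (e * (2 * u / e)^(2*n)))"
    using Fl Flpos by (intro divide_left_mono mult_left_mono) (auto intro!: mult_pos_pos)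
  also have "\<dots> < 4 * sqrt pi / e^2 * (m * s / (2 * u + 1)) * (e * u / (2 * m^2))^(2*n)"
    using middle_ineq[OF n] unfolding e_def u_def m_def s_def by simp
  also have "\<dots> \<le> 4 * sqrt pi / e^2 * (m * s / (2 * u + \<alpha>)) * (e * u / (2 * m^2))^(2*n)"
    using pos al by (intro mult_right_mono mult_left_mono divide_left_mono) auto
  finally have "64 / (16^n * F * (\<alpha> + 2)) < 4 * sqrt pi / e^2 * (m * s / (2 * u + \<alpha>)) * (e * u / (2 * m^2))^(2*n)" .
  then have "Q * (64 / (16^n * F * (\<alpha> + 2))) < Q * (4 * sqrt pi / e^2 * (m * s / (2 * u + \<alpha>)) * (e * u / (2 * m^2))^(2*n))"
    using pos by (intro mult_strict_left_mono) auto
  then show ?thesis unfolding lhs rhs .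
qed

theorem lemma7:
  fixes a T \<alpha> t :: real and n :: nat and s w :: "nat \<Rightarrow> real"
  assumes "a > 0" and "T > 0" and "0 < \<alpha>" and "\<alpha> < 1" and "n > 1"
    and "gauss_jacobi_rule a \<alpha> n s w"
    and "0 < t" and "t < T"
  shows "\<bar>integral {0..a} (\<lambda>x. exp (- t * x) * x powr (\<alpha> - 1))
           - (\<Sum>k = 1..n. w k * exp (- s k * t))\<bar>
         < 4 * sqrt pi * a powr \<alpha> / exp 2
           * ((2 * real n - 1) * real n powr (3 / 2) / (2 * real n + \<alpha>))
           * (a * exp 1 * real n * T / (2 * (2 * real n - 1)^2)) ^ (2 * n)"
proof -
  note a = \<open>a > 0\<close> and TT = \<open>T > 0\<close> and al = \<open>0 < \<alpha>\<close> \<open>\<alpha> < 1\<close> and n1 = \<open>n > 1\<close>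
    and rule = \<open>gauss_jacobi_rule a \<alpha> n s w\<close> and t = \<open>0 < t\<close> \<open>t < T\<close>
  define J where "J = (\<lambda>p. integral {0..a} (\<lambda>x. poly p x * x powr (\<alpha> - 1)))"
  define Sw where "Sw = (\<lambda>p. \<Sum>k = 1..n. w k * poly p (s k))"
  have intp: "(\<lambda>x. poly p x * x powr (\<alpha> - 1)) integrable_on {0..a}" for p
    using int_poly al by blast
  have intp2: "(\<lambda>x. c * (poly p x * x powr (\<alpha> - 1))) integrable_on {0..a}" for p c
    using intp[of "smult c p"] by (simp add: mult.assoc)
  have exact: "J p = Sw p" if "degree p \<le> 2 * n - 1" for p
    using rule that unfolding gauss_jacobi_rule_def J_def Sw_def by (blast intro: integral_unique)
  have Jadd: "J (p + q) = J p + J q" for p q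
    unfolding J_def by (simp add: distrib_right integral_add intp)
  have Sadd: "Sw (p + q) = Sw p + Sw q" for p q
    unfolding Sw_def by (simp add: distrib_left sum.distrib)
  define ns where "ns = map s [1..<Suc n]"
  define om where "om = prod_list (map lin ns)"
  define Om where "Om = om * om"
  have lenns: "length ns = n" by (simp add: ns_def)
  have om_nz: "om \<noteq> 0" unfolding om_def by (rule linprod_nz)
  have om_deg: "degree om = n" and om_co: "coeff om n = 1"
    unfolding om_def using linprod_monic[of ns] lenns by auto
  have om_root: "poly om (s k) = 0" if "k \<in> {1..n}" for k
    unfolding om_def using that by (intro poly_linprod_root) (auto simp: ns_def simp del: upt_Suc)
  have Om_nz: "Om \<noteq> 0" unfolding Om_def using om_nz by simp
  have Om_deg: "degree Om = 2 * n" unfolding Om_def using om_nz om_deg by (simp add: degree_mult_eq)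
  have Om_co: "coeff Om (2 * n) = 1"
  proof -
    have "lead_coeff Om = 1" unfolding Om_def lead_coeff_mult using om_deg om_co by simp
    then show ?thesis using Om_deg by simp
  qed
  have Om_root: "poly Om (s k) = 0" if "k \<in> {1..n}" for k
    unfolding Om_def using om_root[OF that] by simp
  have Om_nn: "poly Om x \<ge> 0" for x unfolding Om_def by simp
  have SwOm: "Sw (p * Om) = 0" for p unfolding Sw_def using Om_root by simp
  have JOm_nn: "J Om \<ge> 0" unfolding J_def using Om_nn by (intro integral_nonneg intp) auto
  have nodes: "s k \<ge> 0" if "k \<in> {1..n}" for k using nodes_nonneg[OF a al(1) n1 rule that] .
  define M where "M = max a (Max (s ` {1..n}))"
  have sM: "s k \<le> M" if "k \<in> {1..n}" for k
  proof -
    have "s k \<le> Max (s ` {1..n})" using that by (intro Max_ge) auto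
    then show ?thesis unfolding M_def by simp
  qed
  have aM: "a \<le> M" unfolding M_def by simp
  define B where "B = t * M"
  define Cb where "Cb = (\<lambda>K. t^(2*n) * (1 + eps B K) / fact (2*n))"
  have EK: "\<bar>J (tp t (K + 2*n)) - Sw (tp t (K + 2*n))\<bar> \<le> Cb K * J Om" for K
  proof -
    define P where "P = tp t (K + 2*n)"
    define Q where "Q = P div Om"
    define R where "R = P mod Om"
    have PQR: "P = Q * Om + R" unfolding Q_def R_def by simp
    have Rdeg: "degree R \<le> 2 * n - 1"
      using degree_mod_less[OF Om_nz, of P] Om_deg n1 unfolding R_def by auto
    have JP: "J P - Sw P = J (Q * Om)"
    proof -
      have "J P = J (Q * Om) + J R" using PQR Jadd by metis
      moreover have "Sw P = Sw (Q * Om) + Sw R" using PQR Sadd by metis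
      ultimately show ?thesis using SwOm exact[OF Rdeg] by simp
    qed
    have Qb: "\<bar>poly Q x\<bar> \<le> Cb K" if x: "x \<in> {0..a}" for x
    proof -
      define c where "c = poly Q x"
      define phi where "phi = P - R - smult c Om"
      have phi_eq: "phi = (Q - [:c:]) * Om"
        unfolding phi_def by (subst PQR) (simp add: algebra_simps)
      have "\<exists>xi\<in>{0..M}. poly ((pderiv ^^ (2*n)) phi) xi = 0"
      proof (cases "phi = 0")
        case True then show ?thesis using aM a by (auto simp: pderiv_iter_0 intro!: bexI[of _ 0])
      next
        case False
        have "poly (Q - [:c:]) x = 0" by (simp add: c_def)
        then have "lin x dvd (Q - [:c:])" unfolding lin_def by (subst poly_eq_0_iff_dvd[symmetric])
        then have "lin x * Om dvd phi" unfolding phi_eq by (rule mult_dvd_mono) simp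
        moreover have "lin x * Om = prod_list (map lin (x # ns @ ns))"
          by (simp add: om_def Om_def)
        ultimately have dv: "prod_list (map lin (x # ns @ ns)) dvd phi" by simp
        have st: "set (x # ns @ ns) \<subseteq> {0..M}"
          using x aM nodes sM by (auto simp: ns_def simp del: upt_Suc)
        have "length (x # ns @ ns) \<le> zc 0 M phi" by (rule zc_linprod[OF False dv st])
        then have "2 * n + 1 \<le> zc 0 M phi" using lenns by simp
        then show ?thesis using rolle_gen[OF False, of "2*n" 0 M] aM a by simp
      qed
      then obtain xi where xi: "xi \<in> {0..M}" "poly ((pderiv ^^ (2*n)) phi) xi = 0" by blast
      have "(pderiv ^^ (2*n)) phi = (pderiv ^^ (2*n)) P - smult c [:fact (2*n):]"
        unfolding phi_def pderiv_iter_diff pderiv_iter_smult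
        using pderiv_iter_small[of R "2*n"] Rdeg n1 pderiv_iter_monic[OF Om_deg Om_co] by simp
      then have e1: "poly ((pderiv ^^ (2*n)) P) xi = c * fact (2*n)" using xi(2) by simp
      have e2: "poly ((pderiv ^^ (2*n)) P) xi = t^(2*n) * (\<Sum>i\<le>K. (-t*xi)^i / fact i)"
        unfolding P_def poly_tp_deriv by (simp add: power_minus_even)
      have yb: "\<bar>-t*xi\<bar> \<le> B" unfolding B_def using xi t by (simp add: abs_mult mult_left_mono)
      have "\<bar>exp (-t*xi) - (\<Sum>i\<le>K. (-t*xi)^i / fact i)\<bar> \<le> eps B K" by (rule exp_partial_err[OF yb])
      moreover have "exp (-t*xi) \<le> 1" using xi t by simp
      moreover have "exp (-t*xi) > 0" by simp
      ultimately have sb: "\<bar>\<Sum>i\<le>K. (-t*xi)^i / fact i\<bar> \<le> 1 + eps B K" by linarith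
      have "\<bar>c\<bar> * fact (2*n) = t^(2*n) * \<bar>\<Sum>i\<le>K. (-t*xi)^i / fact i\<bar>"
      proof -
        have "c * fact (2*n) = t^(2*n) * (\<Sum>i\<le>K. (-t*xi)^i / fact i)" using e1 e2 by simp
        then have "\<bar>c * fact (2*n)\<bar> = \<bar>t^(2*n) * (\<Sum>i\<le>K. (-t*xi)^i / fact i)\<bar>" by simp
        moreover have "\<bar>t^(2*n)\<bar> = t^(2*n)" using t by simp
        ultimately show ?thesis by (simp only: abs_mult) simp
      qed
      also have "\<dots> \<le> t^(2*n) * (1 + eps B K)" using sb t by (intro mult_left_mono) auto
      finally have "\<bar>c\<bar> * fact (2*n) \<le> t^(2*n) * (1 + eps B K)" .
      then show ?thesis unfolding Cb_def c_def by (simp add: field_simps)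
    qed
    have "norm (J (Q * Om)) \<le> integral {0..a} (\<lambda>x. Cb K * (poly Om x * x powr (\<alpha> - 1)))"
      unfolding J_def
    proof (rule integral_norm_bound_integral)
      show "(\<lambda>x. poly (Q * Om) x * x powr (\<alpha> - 1)) integrable_on {0..a}" by (rule intp)
      show "(\<lambda>x. Cb K * (poly Om x * x powr (\<alpha> - 1))) integrable_on {0..a}" by (rule intp2)
      fix x assume x: "x \<in> {0..a}"
      have "\<bar>poly (Q * Om) x * x powr (\<alpha> - 1)\<bar> = \<bar>poly Q x\<bar> * (poly Om x * x powr (\<alpha> - 1))"
        using Om_nn[of x] by (simp add: abs_mult)
      also have "\<dots> \<le> Cb K * (poly Om x * x powr (\<alpha> - 1))"
        using Qb[OF x] Om_nn[of x] by (intro mult_right_mono) auto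
      finally show "norm (poly (Q * Om) x * x powr (\<alpha> - 1)) \<le> Cb K * (poly Om x * x powr (\<alpha> - 1))" by simp
    qed
    also have "\<dots> = Cb K * J Om" unfolding J_def by (rule integral_mult_right)
    finally show ?thesis using JP unfolding P_def by simp
  qed
  define Ef where "Ef = integral {0..a} (\<lambda>x. exp (- t * x) * x powr (\<alpha> - 1)) - (\<Sum>k = 1..n. w k * exp (- s k * t))"
  have ptp: "poly (tp t k) x = (\<Sum>j\<le>k. (-t*x)^j / fact j)" for k x by (rule poly_tp)
  have LJ: "(\<lambda>K. J (tp t (K + 2*n))) \<longlonglongrightarrow> integral {0..a} (\<lambda>x. exp (- t * x) * x powr (\<alpha> - 1))"
  proof -
    have "(\<lambda>k. integral {0..a} (\<lambda>x. poly (tp t k) x * x powr (\<alpha> - 1)))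
        \<longlonglongrightarrow> integral {0..a} (\<lambda>x. exp (- t * x) * x powr (\<alpha> - 1))"
    proof (rule dominated_convergence(2)[where h = "\<lambda>x. exp (t*a) * (poly 1 x * x powr (\<alpha> - 1))"])
      show "(\<lambda>x. poly (tp t k) x * x powr (\<alpha> - 1)) integrable_on {0..a}" for k by (rule intp)
      show "(\<lambda>x. exp (t*a) * (poly 1 x * x powr (\<alpha> - 1))) integrable_on {0..a}" by (rule intp2)
      show "norm (poly (tp t k) x * x powr (\<alpha> - 1)) \<le> exp (t*a) * (poly 1 x * x powr (\<alpha> - 1))"
        if x: "x \<in> {0..a}" for k x
      proof -
        have "\<bar>poly (tp t k) x\<bar> \<le> exp (t * x)"
          unfolding ptp using exp_partial_abs_le[of "t*x" k] x t by simp
        also have "\<dots> \<le> exp (t * a)" using x t by (simp add: mult_left_mono)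
        finally have "\<bar>poly (tp t k) x\<bar> \<le> exp (t * a)" .
        then have "\<bar>poly (tp t k) x\<bar> * x powr (\<alpha> - 1) \<le> exp (t * a) * x powr (\<alpha> - 1)"
          by (intro mult_right_mono) auto
        then show ?thesis by (simp add: abs_mult)
      qed
      show "(\<lambda>k. poly (tp t k) x * x powr (\<alpha> - 1)) \<longlonglongrightarrow> exp (- t * x) * x powr (\<alpha> - 1)"
        if "x \<in> {0..a}" for x
        unfolding ptp by (intro tendsto_mult_right exp_partial_lim)
    qed
    then show ?thesis unfolding J_def by (rule LIMSEQ_ignore_initial_segment)
  qed
  have LS: "(\<lambda>K. Sw (tp t (K + 2*n))) \<longlonglongrightarrow> (\<Sum>k = 1..n. w k * exp (- s k * t))"
  proof -
    have "(\<lambda>N. Sw (tp t N)) \<longlonglongrightarrow> (\<Sum>k = 1..n. w k * exp (- s k * t))"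
      unfolding Sw_def
    proof (intro tendsto_sum tendsto_mult_left)
      fix k
      have "(\<lambda>N. poly (tp t N) (s k)) \<longlonglongrightarrow> exp (- t * s k)"
        unfolding ptp by (rule exp_partial_lim)
      moreover have "- t * s k = - s k * t" by simp
      ultimately show "(\<lambda>N. poly (tp t N) (s k)) \<longlonglongrightarrow> exp (- s k * t)" by (simp add: mult.commute)
    qed
    then show ?thesis by (rule LIMSEQ_ignore_initial_segment)
  qed
  have LE: "(\<lambda>K. \<bar>J (tp t (K + 2*n)) - Sw (tp t (K + 2*n))\<bar>) \<longlonglongrightarrow> \<bar>Ef\<bar>"
    unfolding Ef_def by (intro tendsto_rabs tendsto_diff LJ LS)
  have LC: "(\<lambda>K. Cb K * J Om) \<longlonglongrightarrow> t^(2*n) * (1 + 0) / fact (2*n) * J Om"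
    unfolding Cb_def by (intro tendsto_intros eps_lim) simp
  have main: "\<bar>Ef\<bar> \<le> t^(2*n) / fact (2*n) * J Om"
    using tendsto_le[OF trivial_limit_sequentially LC LE] EK by (simp add: always_eventually)
  define V where "V = chv a (n - 1)"
  have Vd: "degree V \<le> n - 1" and Vc: "coeff V (n - 1) = 1"
    using chv_deg[of a "n - 1"] n1 unfolding V_def by auto
  have V_nz: "V \<noteq> 0" using Vc by auto
  have Vd2: "degree V = n - 1" using Vd le_degree[of V "n - 1"] Vc by simp
  define q where "q = pCons 0 V"
  have q_deg: "degree q = n" unfolding q_def using V_nz Vd2 n1 by simp
  have q_co: "coeff q n = 1"
  proof -
    have "n = Suc (n - 1)" using n1 by simp
    then have "coeff q n = coeff q (Suc (n - 1))" by simp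
    also have "\<dots> = 1" unfolding q_def coeff_pCons_Suc by (rule Vc)
    finally show ?thesis .
  qed
  define r where "r = q - om"
  have r_deg: "degree r \<le> n - 1"
  proof (rule degree_le, intro allI impI)
    fix i assume "n - 1 < i"
    then have "n \<le> i" by simp
    then show "coeff r i = 0"
    proof (cases "i = n")
      case True then show ?thesis unfolding r_def using q_co om_co by simp
    next
      case False
      then have "n < i" using \<open>n \<le> i\<close> by simp
      then show ?thesis unfolding r_def using q_deg om_deg by (simp add: coeff_eq_0)
    qed
  qed
  have Jor: "J (om * r) = 0"
  proof -
    have "degree (om * r) \<le> 2 * n - 1" using degree_mult_le[of om r] om_deg r_deg n1 by simp
    then have "J (om * r) = Sw (om * r)" by (rule exact)
    also have "\<dots> = 0" unfolding Sw_def using om_root by simp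
    finally show ?thesis .
  qed
  have Jrr: "J (r * r) \<ge> 0" unfolding J_def by (intro integral_nonneg intp) auto
  have Jqq: "J (q * q) = J Om + 2 * J (om * r) + J (r * r)"
  proof -
    have "J (q * q) = integral {0..a} (\<lambda>x. (poly Om x * x powr (\<alpha> - 1) + 2 * (poly (om * r) x * x powr (\<alpha> - 1)))
                 + poly (r * r) x * x powr (\<alpha> - 1))"
      unfolding J_def by (intro integral_cong) (simp add: r_def Om_def algebra_simps)
    also have "\<dots> = integral {0..a} (\<lambda>x. poly Om x * x powr (\<alpha> - 1) + 2 * (poly (om * r) x * x powr (\<alpha> - 1)))
                 + J (r * r)"
      unfolding J_def by (rule integral_add[OF integrable_add[OF intp intp2] intp])
    also have "\<dots> = J Om + integral {0..a} (\<lambda>x. 2 * (poly (om * r) x * x powr (\<alpha> - 1))) + J (r * r)"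
      unfolding J_def by (simp only: integral_add[OF intp intp2])
    also have "\<dots> = J Om + 2 * J (om * r) + J (r * r)"
      unfolding J_def by (simp only: integral_mult_right)
    finally show ?thesis .
  qed
  have min: "J Om \<le> J (q * q)" using Jqq Jor Jrr by simp
  define Cq where "Cq = 4 * (a/4)^(2*(n-1))"
  have qb: "J (q * q) \<le> Cq * (a powr (\<alpha>+2) / (\<alpha>+2))"
  proof -
    have hi: "((\<lambda>x. Cq * x powr (\<alpha> + 1)) has_integral Cq * (a powr (\<alpha> + 2) / (\<alpha> + 2))) {0..a}"
    proof -
      have "((\<lambda>x. x powr (\<alpha> + 1)) has_integral a powr (\<alpha> + 1 + 1) / (\<alpha> + 1 + 1)) {0..a}"
        using has_integral_powr_from_0[of "\<alpha> + 1" a] al a by simp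
      then have "((\<lambda>x. x powr (\<alpha> + 1)) has_integral a powr (\<alpha> + 2) / (\<alpha> + 2)) {0..a}"
        by (simp add: add.assoc)
      then show ?thesis by (rule has_integral_mult_right)
    qed
    have "J (q * q) \<le> integral {0..a} (\<lambda>x. Cq * x powr (\<alpha> + 1))"
      unfolding J_def
    proof (rule integral_le)
      show "(\<lambda>x. poly (q * q) x * x powr (\<alpha> - 1)) integrable_on {0..a}" by (rule intp)
      show "(\<lambda>x. Cq * x powr (\<alpha> + 1)) integrable_on {0..a}" using hi by blast
      fix x assume x: "x \<in> {0..a}"
      have vb: "\<bar>poly V x\<bar> \<le> 2 * (a/4)^(n-1)" unfolding V_def using chv_bound[OF a] x by simp
      have "(poly V x)^2 = \<bar>poly V x\<bar>^2" by simp
      also have "\<dots> \<le> (2 * (a/4)^(n-1))^2" using vb by (intro power_mono) auto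
      also have "\<dots> = Cq" unfolding Cq_def by (simp add: power_mult_distrib power_mult[symmetric] mult.commute)
      finally have v2: "(poly V x)^2 \<le> Cq" .
      have "poly (q * q) x * x powr (\<alpha> - 1) = (poly V x)^2 * (x^2 * x powr (\<alpha> - 1))"
        unfolding q_def by (simp add: power2_eq_square algebra_simps)
      also have "x^2 * x powr (\<alpha> - 1) = x powr (\<alpha> + 1)"
        using powr_mult_pow[of x \<alpha> 2] x al by (simp add: add.commute)
      finally have "poly (q * q) x * x powr (\<alpha> - 1) = (poly V x)^2 * x powr (\<alpha> + 1)" .
      also have "\<dots> \<le> Cq * x powr (\<alpha> + 1)" using v2 by (intro mult_right_mono) auto
      finally show "poly (q * q) x * x powr (\<alpha> - 1) \<le> Cq * x powr (\<alpha> + 1)" .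
    qed
    also have "\<dots> = Cq * (a powr (\<alpha> + 2) / (\<alpha> + 2))" using hi by (rule integral_unique)
    finally show ?thesis .
  qed
  have "\<bar>Ef\<bar> \<le> t^(2*n) / fact (2*n) * J Om" by (rule main)
  also have "\<dots> \<le> T^(2*n) / fact (2*n) * J Om"
    using t JOm_nn by (intro mult_right_mono divide_right_mono power_mono) auto
  also have "\<dots> \<le> T^(2*n) / fact (2*n) * (Cq * (a powr (\<alpha>+2) / (\<alpha>+2)))"
    using min qb TT by (intro mult_left_mono) auto
  also have "\<dots> < 4 * sqrt pi * a powr \<alpha> / exp 2
           * ((2 * real n - 1) * real n powr (3 / 2) / (2 * real n + \<alpha>))
           * (a * exp 1 * real n * T / (2 * (2 * real n - 1)^2)) ^ (2 * n)"
    unfolding Cq_def using final_arith[OF a TT al] n1 by simp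
  finally show ?thesis unfolding Ef_def .
qed

end
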